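(* Let $\alpha\ge 0$ and let $\mathcal L$ be a finite collection of pairwise parallel line segments in the plane $\mathbb{R}^2$ such that at least $\alpha\binom{|\mathcal L|}{3}$ of the 3-element subsets of $\mathcal L$ can be stabbed by a line (i.e., there is a line intersecting all three segments). Then there is a set of at least $\frac{\alpha}{3}|\mathcal L|$ segments in $\mathcal L$ that can be stabbed by a single line. *)

theory Defs
  imports "HOL-Analysis.Analysis"
begin

type_synonym point = "real ^ 2"

definition is_segment :: "point set \<Rightarrow> bool" where
  "is_segment S \<longleftrightarrow> (\<exists>a b. a \<noteq> b \<and> S = closed_segment a b)"

definition parallel_segments :: "point set \<Rightarrow> point set \<Rightarrow> bool" where
  "parallel_segments S T \<longleftrightarrow>
     (\<exists>a b c d. a \<noteq> b \<and> c \<noteq> d \<and> S = closed_segment a b \<and> T = closed_segment c d \<and>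
        (\<exists>k::real. d - c = k *\<^sub>R (b - a)))"

definition is_line :: "point set \<Rightarrow> bool" where
  "is_line l \<longleftrightarrow> (\<exists>p v. v \<noteq> 0 \<and> l = {p + t *\<^sub>R v | t. True})"

definition stabbable :: "point set set \<Rightarrow> bool" where
  "stabbable F \<longleftrightarrow> (\<exists>l. is_line l \<and> (\<forall>S\<in>F. S \<inter> l \<noteq> {}))"

end

theory Submission
  imports Defs
begin


definition ff :: "point \<Rightarrow> point \<Rightarrow> real" where
  "ff v x = v$2 * x$1 - v$1 * x$2"
definition gg :: "point \<Rightarrow> point \<Rightarrow> real" where
  "gg v x = v$1 * x$1 + v$2 * x$2"

lemma ff_lin [simp]:
  "ff v (x + y) = ff v x + ff v y" "ff v (x - y) = ff v x - ff v y" "ff v (r *\<^sub>R x) = r * ff v x"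
  "ff v v = 0" "ff v 0 = 0"
  by (simp_all add: ff_def algebra_simps)

lemma gg_lin [simp]:
  "gg v (x + y) = gg v x + gg v y" "gg v (x - y) = gg v x - gg v y" "gg v (r *\<^sub>R x) = r * gg v x"
  "gg v 0 = 0"
  by (simp_all add: gg_def algebra_simps)

lemma v_nz: "v \<noteq> (0::point) \<Longrightarrow> v$1 \<noteq> 0 \<or> v$2 \<noteq> 0"
  by (auto simp: vec_eq_iff forall_2)

lemma gg_vv: "v \<noteq> 0 \<Longrightarrow> gg v v > 0"
proof -
  assume "v \<noteq> 0"
  then have "v$1 \<noteq> 0 \<or> v$2 \<noteq> 0" by (rule v_nz)
  then have "v$1 * v$1 + v$2 * v$2 > 0"
    by (simp add: sum_squares_gt_zero_iff)
  then show ?thesis by (simp add: gg_def)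
qed

lemma fg_inj:
  assumes v: "v \<noteq> 0" and f: "ff v x = ff v y" and g: "gg v x = gg v y"
  shows "x = y"
proof -
  define N where "N = v$1 * v$1 + v$2 * v$2"
  have N: "N > 0" using gg_vv[OF v] by (simp add: gg_def N_def)
  define a where "a = v$1"
  define b where "b = v$2"
  define p where "p = x$1 - y$1"
  define q where "q = x$2 - y$2"
  have e1: "b * p = a * q" using f by (simp add: ff_def algebra_simps a_def b_def p_def q_def)
  have e2: "a * p = - (b * q)" using g by (simp add: gg_def algebra_simps a_def b_def p_def q_def)
  have "N * p = a * (a * p) + b * (b * p)"
    by (simp add: N_def algebra_simps a_def b_def)
  also have "\<dots> = 0" by (simp only: e1 e2) (simp add: algebra_simps)
  finally have 1: "x$1 = y$1" using N by (simp add: p_def)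
  have "N * q = a * (a * q) + b * (b * q)"
    by (simp add: N_def algebra_simps a_def b_def)
  also have "\<dots> = a * (b * p) + b * (b * q)" by (simp only: e1[symmetric])
  also have "\<dots> = b * (a * p) + b * (b * q)" by (simp add: algebra_simps)
  also have "\<dots> = 0" by (simp add: e2)
  finally have 2: "x$2 = y$2" using N by (simp add: q_def)
  show ?thesis using 1 2 by (simp add: vec_eq_iff forall_2)
qed

lemma fg_surj:
  assumes v: "v \<noteq> 0"
  shows "\<exists>x. ff v x = F \<and> gg v x = G"
proof -
  define N where "N = v$1 * v$1 + v$2 * v$2"
  have N: "N > 0" using gg_vv[OF v] by (simp add: gg_def N_def)
  define x :: point where "x = vector [(v$2 * F + v$1 * G) / N, (v$2 * G - v$1 * F) / N]"
  have "ff v x = (v$2 * (v$2 * F + v$1 * G) - v$1 * (v$2 * G - v$1 * F)) / N"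
    by (simp add: x_def ff_def diff_divide_distrib right_diff_distrib)
  also have "\<dots> = F * N / N" by (simp add: N_def algebra_simps)
  finally have fx: "ff v x = F" using N by simp
  have "gg v x = (v$1 * (v$2 * F + v$1 * G) + v$2 * (v$2 * G - v$1 * F)) / N"
    by (simp add: x_def gg_def add_divide_distrib diff_divide_distrib right_diff_distrib distrib_left)
  also have "\<dots> = G * N / N" by (simp add: N_def algebra_simps)
  finally have "gg v x = G" using N by simp
  then show ?thesis using fx by blast
qed


lemma conv_between:
  fixes a b u :: real
  assumes "0 \<le> u" "u \<le> 1"
  shows "min a b \<le> (1 - u) * a + u * b \<and> (1 - u) * a + u * b \<le> max a b"
proof -
  have "(1 - u) * min a b \<le> (1 - u) * a" using assms by (intro mult_left_mono) auto
  moreover have "u * min a b \<le> u * b" using assms by (intro mult_left_mono) auto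
  moreover have "(1 - u) * a \<le> (1 - u) * max a b" using assms by (intro mult_left_mono) auto
  moreover have "u * b \<le> u * max a b" using assms by (intro mult_left_mono) auto
  ultimately show ?thesis by (simp add: algebra_simps)
qed

lemma seg_char:
  assumes v: "v \<noteq> 0" and cd: "c \<noteq> d" and k: "d - c = k *\<^sub>R v"
  shows "x \<in> closed_segment c d \<longleftrightarrow>
     (ff v x = ff v c \<and> min (gg v c) (gg v d) \<le> gg v x \<and> gg v x \<le> max (gg v c) (gg v d))"
proof -
  have fd: "ff v d = ff v c"
  proof -
    have "ff v (d - c) = 0" using k by simp
    then show ?thesis by simp
  qed
  have "k \<noteq> 0" using k cd by auto
  then have gne: "gg v d - gg v c \<noteq> 0"
  proof -
    have "gg v (d - c) = k * gg v v" using k by simp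
    then show ?thesis using \<open>k \<noteq> 0\<close> gg_vv[OF v] by simp
  qed
  show ?thesis
  proof
    assume "x \<in> closed_segment c d"
    then obtain u where u: "0 \<le> u" "u \<le> 1" "x = (1 - u) *\<^sub>R c + u *\<^sub>R d" by (auto simp: in_segment)
    have "ff v x = (1 - u) * ff v c + u * ff v d" by (simp add: u(3))
    then have "ff v x = ff v c" using fd by (simp add: algebra_simps)
    moreover have "gg v x = (1 - u) * gg v c + u * gg v d" using u by simp
    ultimately show "ff v x = ff v c \<and> min (gg v c) (gg v d) \<le> gg v x \<and> gg v x \<le> max (gg v c) (gg v d)"
      using conv_between[OF u(1) u(2)] by simp
  next
    assume H: "ff v x = ff v c \<and> min (gg v c) (gg v d) \<le> gg v x \<and> gg v x \<le> max (gg v c) (gg v d)"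
    define u where "u = (gg v x - gg v c) / (gg v d - gg v c)"
    have u01: "0 \<le> u \<and> u \<le> 1"
    proof (cases "gg v c < gg v d")
      case True
      then show ?thesis using H unfolding u_def by (auto simp: divide_simps)
    next
      case False
      then have "gg v d < gg v c" using gne by simp
      then show ?thesis using H unfolding u_def by (auto simp: divide_simps)
    qed
    define y where "y = (1 - u) *\<^sub>R c + u *\<^sub>R d"
    have "ff v y = ff v x" using H fd unfolding y_def by (simp add: algebra_simps)
    moreover have "gg v y = gg v x"
    proof -
      have "gg v y = gg v c + u * (gg v d - gg v c)" unfolding y_def by (simp add: algebra_simps)
      also have "\<dots> = gg v x" unfolding u_def using gne by simp
      finally show ?thesis .
    qed
    ultimately have "x = y" using fg_inj[OF v] by metis
    then show "x \<in> closed_segment c d" using u01 unfolding y_def in_segment by blast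
  qed
qed

lemma direction:
  assumes par: "\<forall>S\<in>L. \<forall>T\<in>L. parallel_segments S T"
  shows "\<exists>v::point. v \<noteq> 0 \<and> (\<forall>T\<in>L. \<exists>c d k. c \<noteq> d \<and> T = closed_segment c d \<and> d - c = k *\<^sub>R v)"
proof (cases "L = {}")
  case True
  have "(vector [1, 0] :: point) \<noteq> 0" by (auto simp: vec_eq_iff forall_2)
  then show ?thesis using True by blast
next
  case False
  then obtain S0 where S0: "S0 \<in> L" by blast
  have "parallel_segments S0 S0" using par S0 by blast
  then obtain a0 b0 where ab0: "a0 \<noteq> b0" "S0 = closed_segment a0 b0"
    unfolding parallel_segments_def by blast
  define v where "v = b0 - a0"
  have "v \<noteq> 0" using ab0 by (simp add: v_def)
  moreover have "\<exists>c d k. c \<noteq> d \<and> T = closed_segment c d \<and> d - c = k *\<^sub>R v" if T: "T \<in> L" for T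
  proof -
    have "parallel_segments S0 T" using par S0 T by blast
    then obtain a b c d k where H: "a \<noteq> b" "c \<noteq> d" "S0 = closed_segment a b" "T = closed_segment c d"
      "d - c = k *\<^sub>R (b - a)"
      unfolding parallel_segments_def by blast
    have "{a,b} = {a0,b0}" using H(3) ab0(2) by simp
    then have "b - a = v \<or> b - a = - v" unfolding v_def by (auto simp: doubleton_eq_iff)
    then show ?thesis
    proof
      assume "b - a = v" then show ?thesis using H by blast
    next
      assume "b - a = - v"
      then have "d - c = (- k) *\<^sub>R v" using H by simp
      then show ?thesis using H by blast
    qed
  qed
  ultimately show ?thesis by blast
qed

lemma stab_iff:
  assumes v: "v \<noteq> 0"
    and ch: "\<forall>T\<in>F. \<forall>x. x \<in> T \<longleftrightarrow> (ff v x = cc T \<and> aa T \<le> gg v x \<and> gg v x \<le> bb T)"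
    and ab: "\<forall>T\<in>F. aa T \<le> bb T"
  shows "stabbable F \<longleftrightarrow>
    ((\<exists>c0. \<forall>S\<in>F. cc S = c0) \<or> (\<exists>\<alpha> \<beta>. \<forall>S\<in>F. aa S \<le> \<alpha> * cc S + \<beta> \<and> \<alpha> * cc S + \<beta> \<le> bb S))"
proof
  assume "stabbable F"
  then obtain l where l: "is_line l" "\<forall>S\<in>F. S \<inter> l \<noteq> {}" unfolding stabbable_def by blast
  from l(1) have "\<exists>p u. u \<noteq> 0 \<and> l = {p + t *\<^sub>R u | t. True}" unfolding is_line_def .
  then obtain p u where pu: "u \<noteq> 0" "l = {p + t *\<^sub>R u | t. True}" by metis
  have pts: "\<exists>t. p + t *\<^sub>R u \<in> S" if "S \<in> F" for S
  proof -
    have "S \<inter> l \<noteq> {}" using l(2) that by simp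
    then obtain y where "y \<in> S" "y \<in> l" by auto
    then have "y \<in> {p + t *\<^sub>R u | t. True}" using pu(2) by simp
    then obtain t where "y = p + t *\<^sub>R u" by blast
    then show ?thesis using \<open>y \<in> S\<close> by blast
  qed
  have ch': "\<And>T x. T \<in> F \<Longrightarrow> x \<in> T \<longleftrightarrow> (ff v x = cc T \<and> aa T \<le> gg v x \<and> gg v x \<le> bb T)"
    using ch by blast
  show "(\<exists>c0. \<forall>S\<in>F. cc S = c0) \<or> (\<exists>\<alpha> \<beta>. \<forall>S\<in>F. aa S \<le> \<alpha> * cc S + \<beta> \<and> \<alpha> * cc S + \<beta> \<le> bb S)"
  proof (cases "ff v u = 0")
    case True
    have "\<forall>S\<in>F. cc S = ff v p"
    proof
      fix S assume "S \<in> F"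
      then obtain t where "p + t *\<^sub>R u \<in> S" using pts by blast
      then have "ff v (p + t *\<^sub>R u) = cc S" using ch'[OF \<open>S \<in> F\<close>] by blast
      then show "cc S = ff v p" using True by simp
    qed
    then show ?thesis by blast
  next
    case False
    define \<alpha> where "\<alpha> = gg v u / ff v u"
    define \<beta> where "\<beta> = gg v p - ff v p * \<alpha>"
    have "aa S \<le> \<alpha> * cc S + \<beta> \<and> \<alpha> * cc S + \<beta> \<le> bb S" if S: "S \<in> F" for S
    proof -
      obtain t where t: "p + t *\<^sub>R u \<in> S" using pts S by blast
      have m: "ff v (p + t *\<^sub>R u) = cc S \<and> aa S \<le> gg v (p + t *\<^sub>R u) \<and> gg v (p + t *\<^sub>R u) \<le> bb S"
        using ch'[OF S, of "p + t *\<^sub>R u"] t by blast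
      have c: "cc S = ff v p + t * ff v u" using m by simp
      have r: "aa S \<le> gg v p + t * gg v u" "gg v p + t * gg v u \<le> bb S" using m by simp_all
      have au: "\<alpha> * ff v u = gg v u" unfolding \<alpha>_def using False by simp
      have "\<alpha> * cc S + \<beta> = gg v p + t * (\<alpha> * ff v u)" unfolding c \<beta>_def by (simp add: algebra_simps)
      then have "\<alpha> * cc S + \<beta> = gg v p + t * gg v u" using au by simp
      then show ?thesis using r by simp
    qed
    then show ?thesis by blast
  qed
next
  assume "(\<exists>c0. \<forall>S\<in>F. cc S = c0) \<or> (\<exists>\<alpha> \<beta>. \<forall>S\<in>F. aa S \<le> \<alpha> * cc S + \<beta> \<and> \<alpha> * cc S + \<beta> \<le> bb S)"
  then show "stabbable F"
  proof
    assume "\<exists>c0. \<forall>S\<in>F. cc S = c0"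
    then obtain c0 where c0: "\<forall>S\<in>F. cc S = c0" by blast
    obtain p where p: "ff v p = c0" "gg v p = 0" using fg_surj[OF v] by blast
    define l where "l = {p + t *\<^sub>R v | t. True}"
    have "is_line l" unfolding l_def is_line_def by (rule exI[of _ p], rule exI[of _ v]) (use v in simp)
    moreover have "S \<inter> l \<noteq> {}" if S: "S \<in> F" for S
    proof -
      obtain x where x: "ff v x = c0" "gg v x = aa S" using fg_surj[OF v] by blast
      have "x \<in> S" using ch[rule_format, OF S, of x] S x c0 ab by simp
      moreover have xeq: "x = p + (aa S / gg v v) *\<^sub>R v"
        using gg_vv[OF v] x p by (intro fg_inj[OF v]) auto
      have "x \<in> l" unfolding l_def mem_Collect_eq by (rule exI[of _ "aa S / gg v v"]) (simp add: xeq)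
      ultimately show ?thesis by blast
    qed
    ultimately show ?thesis unfolding stabbable_def by (intro exI[of _ l]) blast
  next
    assume "\<exists>\<alpha> \<beta>. \<forall>S\<in>F. aa S \<le> \<alpha> * cc S + \<beta> \<and> \<alpha> * cc S + \<beta> \<le> bb S"
    then obtain \<alpha> \<beta> where ab': "\<forall>S\<in>F. aa S \<le> \<alpha> * cc S + \<beta> \<and> \<alpha> * cc S + \<beta> \<le> bb S" by blast
    obtain p where p: "ff v p = 0" "gg v p = \<beta>" using fg_surj[OF v] by blast
    obtain u where u: "ff v u = 1" "gg v u = \<alpha>" using fg_surj[OF v] by blast
    have "u \<noteq> 0" using u by auto
    define l where "l = {p + t *\<^sub>R u | t. True}"
    have "is_line l" unfolding l_def is_line_def by (rule exI[of _ p], rule exI[of _ u]) (use \<open>u \<noteq> 0\<close> in simp)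
    moreover have "S \<inter> l \<noteq> {}" if S: "S \<in> F" for S
    proof -
      obtain x where x: "ff v x = cc S" "gg v x = \<alpha> * cc S + \<beta>" using fg_surj[OF v] by blast
      have "x \<in> S" using ch[rule_format, OF S, of x] S x ab' by simp
      moreover have xeq: "x = p + (cc S) *\<^sub>R u"
        using x p u by (intro fg_inj[OF v]) (auto simp: algebra_simps)
      have "x \<in> l" unfolding l_def mem_Collect_eq by (rule exI[of _ "cc S"]) (simp add: xeq)
      ultimately show ?thesis by blast
    qed
    ultimately show ?thesis unfolding stabbable_def by (intro exI[of _ l]) blast
  qed
qed



definition ln3 :: "real \<Rightarrow> real \<Rightarrow> real \<Rightarrow> real \<Rightarrow> real \<Rightarrow> real" where
  "ln3 cs bs ct att y = bs + (att - bs) / (ct - cs) * (y - cs)"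

lemma sgn_le:
  fixes q x2 x3 :: real
  assumes "q * (x3 - x2) \<le> 0" "x2 < x3"
  shows "q \<le> 0"
  using assms by (smt (verit) mult_pos_pos)

lemma sgn_ge:
  fixes q x2 x3 :: real
  assumes "0 \<le> q * (x3 - x2)" "x2 < x3"
  shows "0 \<le> q"
  using assms by (smt (verit) mult_neg_pos)

lemma key_real:
  fixes c1 c2 c3 a1 a2 a3 b1 b2 b3 \<alpha> \<beta> :: real
  assumes o: "c1 \<le> c2" "c2 \<le> c3" "c1 < c3"
    and s1: "a1 \<le> \<alpha> * c1 + \<beta>" "\<alpha> * c1 + \<beta> \<le> b1"
    and s2: "a2 \<le> \<alpha> * c2 + \<beta>" "\<alpha> * c2 + \<beta> \<le> b2"
    and s3: "a3 \<le> \<alpha> * c3 + \<beta>" "\<alpha> * c3 + \<beta> \<le> b3"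
  shows "(a2 \<le> ln3 c1 b1 c3 a3 c2 \<and> ln3 c1 b1 c3 a3 c2 \<le> b2)
       \<or> (c2 < c3 \<and> a1 \<le> ln3 c2 b2 c3 a3 c1 \<and> ln3 c2 b2 c3 a3 c1 \<le> b1)
       \<or> (c1 < c2 \<and> a3 \<le> ln3 c1 b1 c2 a2 c3 \<and> ln3 c1 b1 c2 a2 c3 \<le> b3)"
proof -
  define w where "w = ln3 c1 b1 c3 a3 c2"
  define q13 where "q13 = (a3 - b1) / (c3 - c1)"
  have w: "w = b1 + q13 * (c2 - c1)" by (simp add: w_def q13_def ln3_def)
  have q13: "q13 * (c3 - c1) = a3 - b1" using o by (simp add: q13_def)
  consider "a2 \<le> w \<and> w \<le> b2" | "w > b2" | "w < a2" by linarith
  then show ?thesis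
  proof cases
    case 1 then show ?thesis by (simp add: w_def)
  next
    case 2
    have lt: "c2 < c3"
    proof (rule ccontr)
      assume "\<not> c2 < c3" then have "c2 = c3" using o by simp
      then have "w = a3" using w q13 by simp
      then show False using 2 s2 s3 \<open>c2 = c3\<close> by simp
    qed
    define q where "q = (a3 - b2) / (c3 - c2)"
    have q: "q * (c3 - c2) = a3 - b2" using lt by (simp add: q_def)
    have l: "ln3 c2 b2 c3 a3 c1 = b2 + q * (c1 - c2)" by (simp add: ln3_def q_def)
    have "q - \<alpha> \<le> 0"
      by (rule sgn_le[of _ c3 c2]) (use q s2 s3 o lt in \<open>auto simp: algebra_simps\<close>)
    then have A: "0 \<le> (q - \<alpha>) * (c1 - c2)" using o by (simp add: mult_nonpos_nonpos)
    have "0 \<le> q - q13"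
      by (rule sgn_ge[of _ c3 c2]) (use q q13 w 2 lt in \<open>auto simp: algebra_simps\<close>)
    then have B: "(q - q13) * (c1 - c2) \<le> 0" using o by (simp add: mult_nonneg_nonpos)
    have "a1 \<le> ln3 c2 b2 c3 a3 c1" using A s1 s2 l by (simp add: algebra_simps)
    moreover have "ln3 c2 b2 c3 a3 c1 \<le> b1" using B l w 2 by (simp add: algebra_simps)
    ultimately show ?thesis using lt by blast
  next
    case 3
    have lt: "c1 < c2"
    proof (rule ccontr)
      assume "\<not> c1 < c2" then have "c1 = c2" using o by simp
      then have "w = b1" using w by simp
      then show False using 3 s2 s1 \<open>c1 = c2\<close> by simp
    qed
    define q where "q = (a2 - b1) / (c2 - c1)"
    have q: "q * (c2 - c1) = a2 - b1" using lt by (simp add: q_def)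
    have l: "ln3 c1 b1 c2 a2 c3 = b1 + q * (c3 - c1)" by (simp add: ln3_def q_def)
    have "q - \<alpha> \<le> 0"
      by (rule sgn_le[of _ c2 c1]) (use q s1 s2 o lt in \<open>auto simp: algebra_simps\<close>)
    then have A: "(q - \<alpha>) * (c3 - c2) \<le> 0" using o by (simp add: mult_nonpos_nonneg)
    have "0 \<le> q - q13"
      by (rule sgn_ge[of _ c2 c1]) (use q q13 w 3 lt in \<open>auto simp: algebra_simps\<close>)
    then have B: "0 \<le> (q - q13) * (c3 - c2)" using o by simp
    have "ln3 c1 b1 c2 a2 c3 \<le> b3" using A s2 s3 l q by (simp add: algebra_simps)
    moreover have "a3 \<le> ln3 c1 b1 c2 a2 c3" using B l w q q13 3 by (simp add: algebra_simps)
    ultimately show ?thesis using lt by blast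
  qed
qed

definition astab :: "('a \<Rightarrow> real) \<Rightarrow> ('a \<Rightarrow> real) \<Rightarrow> ('a \<Rightarrow> real) \<Rightarrow> 'a set \<Rightarrow> bool" where
  "astab cc aa bb F \<longleftrightarrow> (\<exists>c0. \<forall>S\<in>F. cc S = c0) \<or>
     (\<exists>\<alpha> \<beta>. \<forall>S\<in>F. aa S \<le> \<alpha> * cc S + \<beta> \<and> \<alpha> * cc S + \<beta> \<le> bb S)"

definition good :: "('a \<Rightarrow> real) \<Rightarrow> ('a \<Rightarrow> real) \<Rightarrow> ('a \<Rightarrow> real) \<Rightarrow> 'a \<Rightarrow> 'a \<Rightarrow> 'a \<Rightarrow> bool" where
  "good cc aa bb s t k \<longleftrightarrow> aa k \<le> ln3 (cc s) (bb s) (cc t) (aa t) (cc k)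
      \<and> ln3 (cc s) (bb s) (cc t) (aa t) (cc k) \<le> bb k"

definition hit :: "('a \<Rightarrow> real) \<Rightarrow> ('a \<Rightarrow> real) \<Rightarrow> ('a \<Rightarrow> real) \<Rightarrow> 'a set \<Rightarrow> 'a \<Rightarrow> 'a \<Rightarrow> 'a set" where
  "hit cc aa bb L s t = {k\<in>L. good cc aa bb s t k}"

definition GG :: "('a \<Rightarrow> real) \<Rightarrow> ('a \<Rightarrow> real) \<Rightarrow> ('a \<Rightarrow> real) \<Rightarrow> 'a set \<Rightarrow> 'a set \<Rightarrow> 'a set" where
  "GG cc aa bb L P = (if \<exists>s t. P = {s,t} \<and> cc s < cc t
     then (let st = SOME st. P = {fst st, snd st} \<and> cc (fst st) < cc (snd st)
           in hit cc aa bb L (fst st) (snd st))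
     else {x\<in>L. cc x = cc (SOME x. x \<in> P)})"

lemma ln3_left: "ln3 cs bs ct att cs = bs" by (simp add: ln3_def)
lemma ln3_right: "cs \<noteq> ct \<Longrightarrow> ln3 cs bs ct att ct = att" by (simp add: ln3_def)

lemma good_left: "aa s \<le> bb s \<Longrightarrow> good cc aa bb s t s"
  by (simp add: good_def ln3_left)
lemma good_right: "cc s \<noteq> cc t \<Longrightarrow> aa t \<le> bb t \<Longrightarrow> good cc aa bb s t t"
  by (simp add: good_def ln3_right)

lemma GG_lt:
  assumes "P = {s,t}" "cc s < cc t"
  shows "GG cc aa bb L P = hit cc aa bb L s t"
proof -
  have ex: "\<exists>st. P = {fst st, snd st} \<and> cc (fst st) < cc (snd st)"
    using assms by (intro exI[of _ "(s,t)"]) auto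
  define st where "st = (SOME st. P = {fst st, snd st} \<and> cc (fst st) < cc (snd st))"
  have st: "P = {fst st, snd st} \<and> cc (fst st) < cc (snd st)"
    unfolding st_def by (rule someI_ex[OF ex])
  then have "fst st = s \<and> snd st = t" using assms by (auto simp: doubleton_eq_iff)
  then show ?thesis using assms unfolding GG_def st_def[symmetric] by (auto simp: Let_def)
qed

lemma GG_eq:
  assumes "P = {s,t}" "cc s = cc t"
  shows "GG cc aa bb L P = {x\<in>L. cc x = cc s}"
proof -
  have nex: "\<not> (\<exists>s' t'. P = {s',t'} \<and> cc s' < cc t')"
    using assms by (auto simp: doubleton_eq_iff)
  have "(SOME x. x \<in> P) \<in> P" using assms by (metis insertI1 someI)
  then have "cc (SOME x. x \<in> P) = cc s" using assms by auto
  then show ?thesis unfolding GG_def if_not_P[OF nex] by simp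
qed

lemma hit_astab:
  assumes "cc s < cc t"
  shows "astab cc aa bb (hit cc aa bb L s t)"
proof -
  define \<alpha> where "\<alpha> = (aa t - bb s) / (cc t - cc s)"
  have "\<forall>y. ln3 (cc s) (bb s) (cc t) (aa t) y = \<alpha> * y + (bb s - \<alpha> * cc s)"
  proof
    fix y
    have "cc t - cc s \<noteq> 0" using assms by simp
    then show "ln3 (cc s) (bb s) (cc t) (aa t) y = \<alpha> * y + (bb s - \<alpha> * cc s)"
      unfolding ln3_def \<alpha>_def[symmetric] by (simp add: algebra_simps)
  qed
  then have "\<forall>S\<in>hit cc aa bb L s t. aa S \<le> \<alpha> * cc S + (bb s - \<alpha> * cc s) \<and> \<alpha> * cc S + (bb s - \<alpha> * cc s) \<le> bb S"
    unfolding hit_def good_def by simp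
  then show ?thesis unfolding astab_def by blast
qed

lemma key_sorted:
  assumes o: "cc p \<le> cc q" "cc q \<le> cc r" "cc p < cc r"
    and st: "\<forall>S\<in>{p,q,r}. aa S \<le> \<alpha> * cc S + \<beta> \<and> \<alpha> * cc S + \<beta> \<le> bb S"
  shows "\<exists>s\<in>{p,q,r}. \<exists>t\<in>{p,q,r}. cc s < cc t \<and> (\<forall>k\<in>{p,q,r}. good cc aa bb s t k)"
proof -
  have ab: "aa p \<le> bb p" "aa q \<le> bb q" "aa r \<le> bb r" using st by auto
  have s1: "aa p \<le> \<alpha> * cc p + \<beta>" "\<alpha> * cc p + \<beta> \<le> bb p"
   and s2: "aa q \<le> \<alpha> * cc q + \<beta>" "\<alpha> * cc q + \<beta> \<le> bb q"
   and s3: "aa r \<le> \<alpha> * cc r + \<beta>" "\<alpha> * cc r + \<beta> \<le> bb r" using st by auto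
  have K: "good cc aa bb p r q \<or> (cc q < cc r \<and> good cc aa bb q r p) \<or> (cc p < cc q \<and> good cc aa bb p q r)"
    using key_real[OF o s1 s2 s3] unfolding good_def .
  have pr: "cc p \<noteq> cc r" using o by simp
  show ?thesis
  proof (rule disjE[OF K])
    assume g: "good cc aa bb p r q"
    have "\<forall>k\<in>{p,q,r}. good cc aa bb p r k"
      proof -
        have "good cc aa bb p r p" by (rule good_left) (use ab in simp)
        moreover have "good cc aa bb p r r" by (rule good_right) (use pr ab in simp_all)
        ultimately show ?thesis using g by auto
      qed
    then show ?thesis using o(3) by (intro bexI[of _ p] bexI[of _ r]) simp_all
  next
    assume "(cc q < cc r \<and> good cc aa bb q r p) \<or> (cc p < cc q \<and> good cc aa bb p q r)"
    then show ?thesis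
    proof
      assume g: "cc q < cc r \<and> good cc aa bb q r p"
      then have qr: "cc q \<noteq> cc r" by simp
      have "\<forall>k\<in>{p,q,r}. good cc aa bb q r k"
        proof -
        have "good cc aa bb q r q" by (rule good_left) (use ab in simp)
        moreover have "good cc aa bb q r r" by (rule good_right) (use qr ab in simp_all)
        ultimately show ?thesis using g by auto
      qed
      then show ?thesis using g by (intro bexI[of _ q] bexI[of _ r]) simp_all
    next
      assume g: "cc p < cc q \<and> good cc aa bb p q r"
      then have pq: "cc p \<noteq> cc q" by simp
      have "\<forall>k\<in>{p,q,r}. good cc aa bb p q k"
        proof -
        have "good cc aa bb p q p" by (rule good_left) (use ab in simp)
        moreover have "good cc aa bb p q q" by (rule good_right) (use pq ab in simp_all)
        ultimately show ?thesis using g by auto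
      qed
      then show ?thesis using g by (intro bexI[of _ p] bexI[of _ q]) simp_all
    qed
  qed
qed

lemma key_triple:
  assumes T: "T = {x,y,z}" and ne: "\<not> (cc x = cc y \<and> cc y = cc z)"
    and st: "\<forall>S\<in>T. aa S \<le> \<alpha> * cc S + \<beta> \<and> \<alpha> * cc S + \<beta> \<le> bb S"
  shows "\<exists>s\<in>T. \<exists>t\<in>T. cc s < cc t \<and> (\<forall>k\<in>T. good cc aa bb s t k)"
proof -
  have H: "\<And>p q r. {p,q,r} = T \<Longrightarrow> cc p \<le> cc q \<Longrightarrow> cc q \<le> cc r \<Longrightarrow> cc p < cc r \<Longrightarrow> ?thesis"
    using key_sorted st by metis
  consider "cc x \<le> cc y" "cc y \<le> cc z" | "cc x \<le> cc z" "cc z \<le> cc y" | "cc y \<le> cc x" "cc x \<le> cc z"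
    | "cc y \<le> cc z" "cc z \<le> cc x" | "cc z \<le> cc x" "cc x \<le> cc y" | "cc z \<le> cc y" "cc y \<le> cc x"
    by linarith
  then show ?thesis
  proof cases
    case 1
    have "{x,y,z} = T" using T by blast
    moreover have "cc x < cc z" using 1 ne by linarith
    ultimately show ?thesis using H[of x y z] 1 by blast
  next
    case 2
    have "{x,z,y} = T" using T by blast
    moreover have "cc x < cc y" using 2 ne by linarith
    ultimately show ?thesis using H[of x z y] 2 by blast
  next
    case 3
    have "{y,x,z} = T" using T by blast
    moreover have "cc y < cc z" using 3 ne by linarith
    ultimately show ?thesis using H[of y x z] 3 by blast
  next
    case 4
    have "{y,z,x} = T" using T by blast
    moreover have "cc y < cc x" using 4 ne by linarith
    ultimately show ?thesis using H[of y z x] 4 by blast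
  next
    case 5
    have "{z,x,y} = T" using T by blast
    moreover have "cc z < cc y" using 5 ne by linarith
    ultimately show ?thesis using H[of z x y] 5 by blast
  next
    case 6
    have "{z,y,x} = T" using T by blast
    moreover have "cc z < cc x" using 6 ne by linarith
    ultimately show ?thesis using H[of z y x] 6 by blast
  qed
qed


lemma choose3: "3 * (n choose 3) = (n - 2) * (n choose 2)"
  using binomial_absorption[of 2 n] binomial_absorb_comp[of n 2]
  by (simp add: numeral_3_eq_3 numeral_2_eq_2)

lemma astab_subset: "astab cc aa bb F \<Longrightarrow> G \<subseteq> F \<Longrightarrow> astab cc aa bb G"
  unfolding astab_def by blast

lemma abstract_main:
  fixes L :: "'a set" and cc aa bb :: "'a \<Rightarrow> real" and \<alpha> :: real
  assumes fin: "finite L" and ab: "\<forall>S\<in>L. aa S \<le> bb S"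
    and a0: "0 \<le> \<alpha>" and a1: "\<alpha> \<le> 1"
    and cnt: "real (card {T. T \<subseteq> L \<and> card T = 3 \<and> astab cc aa bb T}) \<ge> \<alpha> * real (card L choose 3)"
  shows "\<exists>F\<subseteq>L. astab cc aa bb F \<and> real (card F) \<ge> \<alpha> / 3 * real (card L)"
proof -
  define M where "M = card ` {F. F \<subseteq> L \<and> astab cc aa bb F}"
  have finM: "finite M" unfolding M_def using fin by simp
  have "astab cc aa bb {}" unfolding astab_def by simp
  then have "0 \<in> M" unfolding M_def by force
  define m where "m = Max M"
  have "m \<in> M" unfolding m_def using finM \<open>0 \<in> M\<close> Max_in by blast
  then obtain F0 where F0: "F0 \<subseteq> L" "astab cc aa bb F0" "card F0 = m" unfolding M_def by blast
  have mx: "card F \<le> m" if "F \<subseteq> L" "astab cc aa bb F" for F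
    unfolding m_def using finM that M_def by (intro Max_ge) auto
  define n where "n = card L"
  have "\<alpha> / 3 * real n \<le> real m"
  proof (cases "n < 3")
    case True
    show ?thesis
    proof (cases "n = 0")
      case True then show ?thesis by simp
    next
      case False
      then obtain S where "S \<in> L" unfolding n_def by fastforce
      have "astab cc aa bb {S}" unfolding astab_def by auto
      then have "card {S} \<le> m" using mx \<open>S \<in> L\<close> by blast
      then have "1 \<le> real m" by simp
      moreover have "\<alpha> / 3 * real n \<le> 1 / 3 * 2"
        using \<open>n < 3\<close> a0 a1 by (intro mult_mono) auto
      ultimately show ?thesis by linarith
    qed
  next
    case False
    then have n3: "3 \<le> n" by simp
    define Pairs where "Pairs = {P. P \<subseteq> L \<and> card P = 2}"
    define G where "G = GG cc aa bb L"
    define A where "A = (\<lambda>P. {T. card T = 3 \<and> P \<subseteq> T \<and> T \<subseteq> G P})"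
    have pairE: "\<exists>s t. P = {s,t} \<and> s \<noteq> t \<and> s \<in> L \<and> t \<in> L" if "P \<in> Pairs" for P
      using that unfolding Pairs_def by (auto simp: card_2_iff)
    have Gprop: "G P \<subseteq> L \<and> astab cc aa bb (G P) \<and> P \<subseteq> G P" if hP: "P \<in> Pairs" for P
    proof -
      obtain s t where st: "P = {s,t}" "s \<noteq> t" "s \<in> L" "t \<in> L" using pairE[OF hP] by blast
      consider "cc s < cc t" | "cc t < cc s" | "cc s = cc t" by linarith
      then show ?thesis
      proof cases
        case 1
        have "G P = hit cc aa bb L s t" unfolding G_def by (rule GG_lt[OF st(1) 1])
        moreover have "good cc aa bb s t s" by (rule good_left) (use ab st in simp)
        moreover have "good cc aa bb s t t" by (rule good_right) (use ab st 1 in simp_all)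
        ultimately show ?thesis using hit_astab[of cc s t aa bb L, OF 1] st unfolding hit_def by auto
      next
        case 2
        have P': "P = {t,s}" using st by auto
        have "G P = hit cc aa bb L t s" unfolding G_def by (rule GG_lt[OF P' 2])
        moreover have "good cc aa bb t s t" by (rule good_left) (use ab st in simp)
        moreover have "good cc aa bb t s s" by (rule good_right) (use ab st 2 in simp_all)
        ultimately show ?thesis using hit_astab[of cc t s aa bb L, OF 2] st unfolding hit_def by auto
      next
        case 3
        have "G P = {x\<in>L. cc x = cc s}" unfolding G_def by (rule GG_eq[OF st(1) 3])
        moreover have "astab cc aa bb {x\<in>L. cc x = cc s}" unfolding astab_def by auto
        ultimately show ?thesis using st 3 by auto
      qed
    qed
    have finP: "finite Pairs" unfolding Pairs_def using fin by simp
    have cardP: "card Pairs = n choose 2" unfolding Pairs_def n_def by (rule n_subsets[OF fin])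
    have cardA: "card (A P) \<le> m - 2" if "P \<in> Pairs" for P
    proof -
      have GP: "G P \<subseteq> L" "astab cc aa bb (G P)" "P \<subseteq> G P" using Gprop[OF that] by auto
      have cP: "card P = 2" "finite P" using that fin unfolding Pairs_def by (auto intro: finite_subset)
      have finG: "finite (G P)" using GP fin by (auto intro: finite_subset)
      have "A P \<subseteq> (\<lambda>u. insert u P) ` (G P - P)"
      proof
        fix T assume "T \<in> A P"
        then have T: "card T = 3" "P \<subseteq> T" "T \<subseteq> G P" unfolding A_def by auto
        have finT: "finite T" using T finG by (auto intro: finite_subset)
        have "card (T - P) = 1" using card_Diff_subset[OF cP(2) T(2)] T cP by simp
        then obtain u where u: "T - P = {u}" by (auto simp: card_1_singleton_iff)
        then have "T = insert u P" using T by blast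
        moreover have "u \<in> G P - P" using u T by blast
        ultimately show "T \<in> (\<lambda>u. insert u P) ` (G P - P)" by blast
      qed
      then have "card (A P) \<le> card (G P - P)"
        using finG by (meson card_image_le finite_Diff le_trans card_mono finite_imageI)
      also have "\<dots> = card (G P) - 2" using card_Diff_subset[OF cP(2) GP(3)] cP by simp
      also have "\<dots> \<le> m - 2" using mx[OF GP(1) GP(2)] by simp
      finally show ?thesis .
    qed
    have cover: "{T. T \<subseteq> L \<and> card T = 3 \<and> astab cc aa bb T} \<subseteq> (\<Union>P\<in>Pairs. A P)"
    proof
      fix T assume "T \<in> {T. T \<subseteq> L \<and> card T = 3 \<and> astab cc aa bb T}"
      then have T: "T \<subseteq> L" "card T = 3" "astab cc aa bb T" by auto
      then obtain x y z where xyz: "T = {x,y,z}" "x \<noteq> y" "y \<noteq> z" "x \<noteq> z"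
        by (auto simp: card_3_iff)
      show "T \<in> (\<Union>P\<in>Pairs. A P)"
      proof (cases "cc x = cc y \<and> cc y = cc z")
        case True
        have PP: "{x,y} \<in> Pairs" using xyz T unfolding Pairs_def by auto
        have "G {x,y} = {w\<in>L. cc w = cc x}" unfolding G_def by (rule GG_eq[of "{x,y}" x y]) (use True in auto)
        then have "T \<in> A {x,y}" unfolding A_def using T xyz True by auto
        then show ?thesis using PP by blast
      next
        case False
        have "\<not> (\<exists>c0. \<forall>S\<in>T. cc S = c0)" using False xyz by auto
        then obtain \<alpha>' \<beta> where st: "\<forall>S\<in>T. aa S \<le> \<alpha>' * cc S + \<beta> \<and> \<alpha>' * cc S + \<beta> \<le> bb S"
          using T(3) unfolding astab_def by blast
        obtain s t where s: "s \<in> T" "t \<in> T" "cc s < cc t" "\<forall>k\<in>T. good cc aa bb s t k"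
          using key_triple[OF xyz(1) False st] by blast
        have "s \<noteq> t" using s(3) by auto
        then have PP: "{s,t} \<in> Pairs" using s T unfolding Pairs_def by auto
        have "G {s,t} = hit cc aa bb L s t" unfolding G_def by (rule GG_lt[of "{s,t}" s t]) (use s in auto)
        then have "T \<in> A {s,t}" unfolding A_def hit_def using T s by auto
        then show ?thesis using PP by blast
      qed
    qed
    have finA: "finite (\<Union>P\<in>Pairs. A P)"
    proof -
      have "(\<Union>P\<in>Pairs. A P) \<subseteq> Pow L" using Gprop unfolding A_def by blast
      then show ?thesis using fin by (meson finite_Pow_iff finite_subset)
    qed
    have "card {T. T \<subseteq> L \<and> card T = 3 \<and> astab cc aa bb T} \<le> card (\<Union>P\<in>Pairs. A P)"
      by (rule card_mono[OF finA cover])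
    also have "\<dots> \<le> (\<Sum>P\<in>Pairs. card (A P))" by (rule card_UN_le[OF finP])
    also have "\<dots> \<le> (\<Sum>P\<in>Pairs. m - 2)" by (rule sum_mono) (use cardA in auto)
    also have "\<dots> = (n choose 2) * (m - 2)" using cardP by simp
    finally have B: "\<alpha> * real (n choose 3) \<le> real ((n choose 2) * (m - 2))"
      using cnt unfolding n_def by linarith
    have C3: "3 * real (n choose 3) = (real n - 2) * real (n choose 2)"
    proof -
      have "real (3 * (n choose 3)) = real ((n - 2) * (n choose 2))" by (simp only: choose3[of n])
      then show ?thesis using n3 by (simp add: of_nat_diff)
    qed
    have pos2: "0 < real (n choose 2)" using n3 by simp
    show ?thesis
    proof (cases "2 \<le> m")
      case True
      have B': "\<alpha> * real (n choose 3) \<le> real (n choose 2) * (real m - 2)"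
        using B True by (simp add: of_nat_diff)
      have "\<alpha> * ((real n - 2) * real (n choose 2)) = \<alpha> * (3 * real (n choose 3))"
        using C3 by simp
      also have "\<dots> = 3 * (\<alpha> * real (n choose 3))" by simp
      also have "\<dots> \<le> 3 * (real (n choose 2) * (real m - 2))" using B' by simp
      finally have "\<alpha> * ((real n - 2) * real (n choose 2)) \<le> 3 * ((real m - 2) * real (n choose 2))"
        by (simp add: algebra_simps)
      then have "(\<alpha> * (real n - 2)) * real (n choose 2) \<le> (3 * (real m - 2)) * real (n choose 2)"
        by (simp add: algebra_simps)
      then have "\<alpha> * (real n - 2) \<le> 3 * (real m - 2)" using pos2 by simp
      then have "\<alpha> * real n \<le> 3 * real m" using a1 by (simp add: algebra_simps)
      then show ?thesis by simp
    next
      case False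
      then have "\<alpha> * real (n choose 3) \<le> 0" using B by simp
      moreover have "0 < real (n choose 3)" using n3 by simp
      ultimately have "\<alpha> \<le> 0" by (simp add: mult_le_0_iff)
      then show ?thesis using a0 by simp
    qed
  qed
  then show ?thesis using F0 unfolding n_def by blast
qed


theorem lemma4:
  fixes L :: "point set set" and \<alpha> :: real
  assumes "\<alpha> \<ge> 0" and "\<alpha> \<le> 1"
    and "finite L"
    and "\<forall>S\<in>L. is_segment S"
    and "\<forall>S\<in>L. \<forall>T\<in>L. parallel_segments S T"
    and "real (card {T. T \<subseteq> L \<and> card T = 3 \<and> stabbable T}) \<ge> \<alpha> * real (card L choose 3)"
  shows "\<exists>F\<subseteq>L. stabbable F \<and> real (card F) \<ge> \<alpha> / 3 * real (card L)"
proof -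
  obtain v where v: "v \<noteq> 0" and dir: "\<forall>T\<in>L. \<exists>c d k. c \<noteq> d \<and> T = closed_segment c d \<and> d - c = k *\<^sub>R v"
    using direction[OF assms(5)] by blast
  define ep where "ep T = (SOME cd. fst cd \<noteq> snd cd \<and> T = closed_segment (fst cd) (snd cd)
      \<and> (\<exists>k. snd cd - fst cd = k *\<^sub>R v))" for T
  have epT: "fst (ep T) \<noteq> snd (ep T) \<and> T = closed_segment (fst (ep T)) (snd (ep T))
      \<and> (\<exists>k. snd (ep T) - fst (ep T) = k *\<^sub>R v)" if T: "T \<in> L" for T
  proof -
    obtain c d k where "c \<noteq> d" "T = closed_segment c d" "d - c = k *\<^sub>R v" using dir T by blast
    then have "\<exists>cd. fst cd \<noteq> snd cd \<and> T = closed_segment (fst cd) (snd cd)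
      \<and> (\<exists>k. snd cd - fst cd = k *\<^sub>R v)" by (intro exI[of _ "(c,d)"]) auto
    then show ?thesis unfolding ep_def by (rule someI_ex)
  qed
  define cc where "cc T = ff v (fst (ep T))" for T
  define aa where "aa T = min (gg v (fst (ep T))) (gg v (snd (ep T)))" for T
  define bb where "bb T = max (gg v (fst (ep T))) (gg v (snd (ep T)))" for T
  have ch: "\<forall>T\<in>L. \<forall>x. x \<in> T \<longleftrightarrow> (ff v x = cc T \<and> aa T \<le> gg v x \<and> gg v x \<le> bb T)"
  proof (intro ballI allI)
    fix T x assume T: "T \<in> L"
    define c0 where "c0 = fst (ep T)"
    define d0 where "d0 = snd (ep T)"
    have e: "c0 \<noteq> d0" "T = closed_segment c0 d0" "\<exists>k. d0 - c0 = k *\<^sub>R v"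
      using epT[OF T] unfolding c0_def d0_def by auto
    obtain k where k: "d0 - c0 = k *\<^sub>R v" using e(3) by blast
    have sc: "x \<in> closed_segment c0 d0 \<longleftrightarrow>
      (ff v x = ff v c0 \<and> min (gg v c0) (gg v d0) \<le> gg v x \<and> gg v x \<le> max (gg v c0) (gg v d0))"
      by (rule seg_char[OF v e(1) k])
    show "x \<in> T \<longleftrightarrow> (ff v x = cc T \<and> aa T \<le> gg v x \<and> gg v x \<le> bb T)"
      unfolding cc_def aa_def bb_def c0_def[symmetric] d0_def[symmetric] e(2)[symmetric] by (rule sc[unfolded e(2)[symmetric]])
  qed
  have ab: "\<forall>T\<in>L. aa T \<le> bb T" unfolding aa_def bb_def by (auto simp: min_def max_def)
  have eq: "stabbable F \<longleftrightarrow> astab cc aa bb F" if FL: "F \<subseteq> L" for F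
  proof -
    have ch': "\<forall>T\<in>F. \<forall>x. x \<in> T \<longleftrightarrow> (ff v x = cc T \<and> aa T \<le> gg v x \<and> gg v x \<le> bb T)"
      using ch FL by (meson subsetD)
    have ab': "\<forall>T\<in>F. aa T \<le> bb T" using ab FL by (meson subsetD)
    show ?thesis unfolding astab_def by (rule stab_iff[OF v ch' ab'])
  qed
  have "{T. T \<subseteq> L \<and> card T = 3 \<and> stabbable T} = {T. T \<subseteq> L \<and> card T = 3 \<and> astab cc aa bb T}"
  proof (rule Collect_cong)
    fix T show "(T \<subseteq> L \<and> card T = 3 \<and> stabbable T) = (T \<subseteq> L \<and> card T = 3 \<and> astab cc aa bb T)"
      using eq[of T] by blast
  qed
  then have cnt: "real (card {T. T \<subseteq> L \<and> card T = 3 \<and> astab cc aa bb T}) \<ge> \<alpha> * real (card L choose 3)"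
    using assms(6) by simp
  obtain F where F: "F \<subseteq> L" "astab cc aa bb F" "real (card F) \<ge> \<alpha> / 3 * real (card L)"
    using abstract_main[OF assms(3) ab assms(1) assms(2) cnt] by blast
  have "stabbable F" using eq[OF F(1)] F(2) by simp
  then show ?thesis using F by blast
qed

end
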